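(* Let $(\Omega,\mathcal F,\mu)$ be a measure space and $\mathscr A\subset L^\infty(\Omega,\mathcal F,\mu)$. The following are equivalent: (i) $\mathscr A$ is uniformly approximable in $L^\infty$; (ii) $\sup_{f\in\mathscr A}\mathcal N(f,\varepsilon)<\infty$ for every $\varepsilon>0$. In this case $N_{\infty,\varepsilon}(\mathscr A)=\sup_{f\in\mathscr A}\mathcal N(f,\varepsilon)$ for every $\varepsilon>0$.
   Context: All measures are assumed not identically zero. $\mathscr G_{\infty,k}$ is the set of functions $\sum_{i=1}^l a_i\mathbf 1_{A_i}$ with $l\le k$, $\{A_i\}$ a measurable partition of $\Omega$, $a_i\in\mathbb R$. For $\mathscr A\subset L^\infty$, $N_{\infty,\varepsilon}(\mathscr A)=\inf\{k\ge1:\ \forall f\in\mathscr A\ \exists h\in\mathscr G_{\infty,k},\ \|f-h\|_\infty\le\varepsilon\}$ ($\inf\emptyset=\infty$); $\mathscr A$ is uniformly approximable if $N_{\infty,\varepsilon}(\mathscr A)<\infty$ for all $\varepsilon>0$. For $M\subset\mathbb R$, $\mathcal N(M,\varepsilon)$ is the least number of closed intervals of radius $\varepsilon$ covering $M$. For a measurable $f$, $\mathcal N(f,\varepsilon)=\inf\{\mathcal N(g(\Omega),\varepsilon):\ g \text{ measurable},\ g=f\ \mu\text{-a.e.}\}$. *)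

theory Defs
  imports "HOL-Probability.Probability"
begin

text \<open>Elements of L-infinity are represented by (real-valued) representatives:
  Borel-measurable, essentially bounded functions.\<close>
definition Linf :: "'a measure \<Rightarrow> ('a \<Rightarrow> real) set" where
  "Linf M = {f. f \<in> borel_measurable M \<and> (\<exists>C. AE x in M. \<bar>f x\<bar> \<le> C)}"

definition linf_dist :: "'a measure \<Rightarrow> ('a \<Rightarrow> real) \<Rightarrow> ('a \<Rightarrow> real) \<Rightarrow> ereal" where
  "linf_dist M f h = esssup M (\<lambda>x. ereal \<bar>f x - h x\<bar>)"

definition G_inf :: "'a measure \<Rightarrow> nat \<Rightarrow> ('a \<Rightarrow> real) set" where
  "G_inf M k = {h. \<exists>l\<le>k. \<exists>(A::nat \<Rightarrow> 'a set) (a::nat \<Rightarrow> real).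
      (\<forall>i<l. A i \<in> sets M) \<and> disjoint_family_on A {..<l} \<and>
      (\<Union>i<l. A i) = space M \<and>
      h = (\<lambda>x. \<Sum>i<l. a i * indicator (A i) x)}"

text \<open>N_{\infty,\varepsilon}(A), with Inf of the empty set = \<infinity>.\<close>
definition N_inf :: "'a measure \<Rightarrow> real \<Rightarrow> ('a \<Rightarrow> real) set \<Rightarrow> enat" where
  "N_inf M \<epsilon> \<A> = Inf (enat ` {k. k \<ge> 1 \<and>
      (\<forall>f\<in>\<A>. \<exists>h\<in>G_inf M k. linf_dist M f h \<le> ereal \<epsilon>)})"

definition unif_approx :: "'a measure \<Rightarrow> ('a \<Rightarrow> real) set \<Rightarrow> bool" where
  "unif_approx M \<A> \<longleftrightarrow> (\<forall>\<epsilon>>0. N_inf M \<epsilon> \<A> < \<infinity>)"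

definition cover_num :: "real set \<Rightarrow> real \<Rightarrow> enat" where
  "cover_num S \<epsilon> = Inf (enat ` {n. \<exists>C. finite C \<and> card C = n \<and>
      S \<subseteq> (\<Union>c\<in>C. {c - \<epsilon> .. c + \<epsilon>})})"

definition cover_num_fun :: "'a measure \<Rightarrow> ('a \<Rightarrow> real) \<Rightarrow> real \<Rightarrow> enat" where
  "cover_num_fun M f \<epsilon> = Inf {cover_num (g ` space M) \<epsilon> | g.
      g \<in> borel_measurable M \<and> (AE x in M. g x = f x)}"

end

theory Submission
  imports Defs
begin

lemma sum_ind:
  fixes l :: nat
  assumes "disjoint_family_on A {..<l}" "i<l" "x\<in>A i"
  shows "(\<Sum>j<l. (a j::real) * indicator (A j) x) = a i"
proof -
  have "(\<Sum>j<l. a j * indicator (A j) x) = a i * indicator (A i) x + (\<Sum>j\<in>{..<l}-{i}. a j * indicator (A j) x)"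
    using assms(2) by (subst sum.remove[of "{..<l}" i]) auto
  also have "(\<Sum>j\<in>{..<l}-{i}. a j * indicator (A j) x) = 0"
  proof (rule sum.neutral, rule ballI)
    fix j assume "j \<in> {..<l}-{i}"
    then have "x \<notin> A j" using assms unfolding disjoint_family_on_def by blast
    then show "a j * indicator (A j) x = 0" by simp
  qed
  finally show ?thesis using assms(3) by simp
qed

lemma enat_Inf_le:
  fixes S :: "enat set"
  assumes "Inf S \<le> enat k"
  shows "\<exists>x\<in>S. x \<le> enat k"
proof -
  have "S \<noteq> {}" using assms by (auto simp: Inf_enat_def)
  then have "Inf S \<in> S" by (auto simp: Inf_enat_def intro: LeastI)
  then show ?thesis using assms by blast
qed

lemma dirA:
  assumes f: "f \<in> borel_measurable M" and h: "h \<in> G_inf M k" and d: "linf_dist M f h \<le> ereal \<epsilon>" and e: "0 \<le> \<epsilon>"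
  shows "cover_num_fun M f \<epsilon> \<le> enat k"
proof -
  obtain l A a where l: "l \<le> k" and As: "\<forall>i<l. A i \<in> sets M" and dj: "disjoint_family_on A {..<l}"
    and un: "(\<Union>i<l. A i) = space M" and hd: "h = (\<lambda>x. \<Sum>i<l. a i * indicator (A i) x)"
    using h unfolding G_inf_def by blast
  have hm: "h \<in> borel_measurable M" unfolding hd
    by (rule borel_measurable_sum, rule borel_measurable_times, simp, rule borel_measurable_indicator) (use As in auto)
  define g where "g = (\<lambda>x. if \<bar>f x - h x\<bar> \<le> \<epsilon> then f x else h x)"
  have gm: "g \<in> borel_measurable M" unfolding g_def using f hm by measurable
  have "AE x in M. ereal \<bar>f x - h x\<bar> \<le> linf_dist M f h" unfolding linf_dist_def by (rule esssup_AE)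
  then have ae: "AE x in M. g x = f x" unfolding g_def
  proof eventually_elim
    case (elim x)
    then have "ereal \<bar>f x - h x\<bar> \<le> ereal \<epsilon>" using d by (rule order_trans)
    then show ?case by simp
  qed
  have hv: "h x = a i" if "x \<in> A i" "i < l" for x i unfolding hd using sum_ind[OF dj that(2,1)] .
  have cov: "g ` space M \<subseteq> (\<Union>c\<in>a ` {..<l}. {c - \<epsilon> .. c + \<epsilon>})"
  proof
    fix y assume "y \<in> g ` space M"
    then obtain x where x: "x \<in> space M" "y = g x" by blast
    then obtain i where i: "i < l" "x \<in> A i" using un by blast
    have "\<bar>g x - a i\<bar> \<le> \<epsilon>" using hv[OF i(2,1)] e unfolding g_def by auto
    then show "y \<in> (\<Union>c\<in>a ` {..<l}. {c - \<epsilon> .. c + \<epsilon>})" using i x by (intro UN_I[of "a i"]) (auto simp: abs_le_iff)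
  qed
  have "cover_num (g ` space M) \<epsilon> \<le> enat (card (a ` {..<l}))"
    unfolding cover_num_def using cov by (intro Inf_lower) blast
  also have "\<dots> \<le> enat k" using l card_image_le[of "{..<l}" a] by simp
  finally have c: "cover_num (g ` space M) \<epsilon> \<le> enat k" .
  have "cover_num_fun M f \<epsilon> \<le> cover_num (g ` space M) \<epsilon>"
    unfolding cover_num_fun_def using gm ae by (intro Inf_lower) blast
  then show ?thesis using c by simp
qed

lemma dirB:
  assumes f: "f \<in> borel_measurable M" and c: "cover_num_fun M f \<epsilon> \<le> enat k"
  shows "\<exists>h\<in>G_inf M k. linf_dist M f h \<le> ereal \<epsilon>"
proof -
  obtain g where gm: "g \<in> borel_measurable M" and ae: "AE x in M. g x = f x"
    and cg: "cover_num (g ` space M) \<epsilon> \<le> enat k"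
    using enat_Inf_le[OF c[unfolded cover_num_fun_def]] by blast
  obtain n C where "enat n \<le> enat k" and fC: "finite C" and cC: "card C = n"
    and cov: "g ` space M \<subseteq> (\<Union>c\<in>C. {c - \<epsilon> .. c + \<epsilon>})"
    using enat_Inf_le[OF cg[unfolded cover_num_def]] by blast
  then have nk: "n \<le> k" by simp
  define cs where "cs = sorted_list_of_set C"
  have lcs: "length cs = n" and scs: "set cs = C" using fC cC unfolding cs_def by auto
  define a where "a i = cs ! i" for i
  define I where "I i = g -` {a i - \<epsilon> .. a i + \<epsilon>} \<inter> space M" for i
  define A where "A i = I i - (\<Union>j<i. I j)" for i
  have Is: "I i \<in> sets M" for i unfolding I_def using gm by measurable
  have As: "\<forall>i<n. A i \<in> sets M" unfolding A_def using Is by auto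
  have dj: "disjoint_family_on A {..<n}"
    unfolding disjoint_family_on_def
  proof (intro ballI impI)
    fix p q :: nat assume "p \<noteq> q"
    then have "p < q \<or> q < p" by arith
    then show "A p \<inter> A q = {}" unfolding A_def by auto
  qed
  have un: "(\<Union>i<n. A i) = space M"
  proof
    show "(\<Union>i<n. A i) \<subseteq> space M" unfolding A_def I_def by auto
  next
    show "space M \<subseteq> (\<Union>i<n. A i)"
    proof
      fix x assume x: "x \<in> space M"
      then obtain c where "c \<in> C" "g x \<in> {c - \<epsilon> .. c + \<epsilon>}" using cov by blast
      then obtain j where j: "j < n" "a j = c" using scs lcs unfolding a_def by (metis in_set_conv_nth)
      have ex: "\<exists>j. j < n \<and> x \<in> I j" using j x \<open>g x \<in> _\<close> unfolding I_def by auto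
      define i where "i = (LEAST j. j < n \<and> x \<in> I j)"
      have i: "i < n \<and> x \<in> I i" unfolding i_def using LeastI_ex[OF ex] .
      have "\<not> (j < n \<and> x \<in> I j)" if "j < i" for j unfolding i_def using not_less_Least that i_def by blast
      then have "x \<notin> (\<Union>j<i. I j)" using i by auto
      then show "x \<in> (\<Union>i<n. A i)" using i unfolding A_def by blast
    qed
  qed
  define h where "h = (\<lambda>x. \<Sum>i<n. a i * indicator (A i) x)"
  have hG: "h \<in> G_inf M k" unfolding G_inf_def h_def using nk As dj un by blast
  have hm: "h \<in> borel_measurable M" unfolding h_def
    by (rule borel_measurable_sum, rule borel_measurable_times, simp, rule borel_measurable_indicator) (use As in auto)
  have "AE x in M. ereal \<bar>f x - h x\<bar> \<le> ereal \<epsilon>"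
    using ae AE_space
  proof eventually_elim
    case (elim x)
    then obtain i where i: "i < n" "x \<in> A i" using un by blast
    have "h x = a i" unfolding h_def using sum_ind[OF dj i] .
    moreover have "g x \<in> {a i - \<epsilon> .. a i + \<epsilon>}" using i unfolding A_def I_def by auto
    ultimately show ?case using elim by (auto simp: abs_le_iff)
  qed
  then have "linf_dist M f h \<le> ereal \<epsilon>" unfolding linf_dist_def
    by (intro esssup_I) (use f hm in measurable)
  then show ?thesis using hG by blast
qed

lemma Inf_enat_up: "Inf (enat ` {k. m \<le> k}) = enat m"
proof (rule antisym)
  show "Inf (enat ` {k. m \<le> k}) \<le> enat m" by (rule Inf_lower) auto
  show "enat m \<le> Inf (enat ` {k. m \<le> k})" by (rule Inf_greatest) auto
qed

lemma N_eq:
  assumes "\<A> \<subseteq> Linf M" "0 \<le> \<epsilon>"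
  shows "N_inf M \<epsilon> \<A> = max 1 (SUP f\<in>\<A>. cover_num_fun M f \<epsilon>)"
proof -
  define S where "S = (SUP f\<in>\<A>. cover_num_fun M f \<epsilon>)"
  have meas: "f \<in> borel_measurable M" if "f \<in> \<A>" for f using assms(1) that unfolding Linf_def by auto
  have eq: "{k. k \<ge> 1 \<and> (\<forall>f\<in>\<A>. \<exists>h\<in>G_inf M k. linf_dist M f h \<le> ereal \<epsilon>)}
      = {k. 1 \<le> k \<and> S \<le> enat k}"
  proof -
    have "(\<forall>f\<in>\<A>. \<exists>h\<in>G_inf M k. linf_dist M f h \<le> ereal \<epsilon>) \<longleftrightarrow> S \<le> enat k" for k
      unfolding S_def SUP_le_iff using dirA[OF meas _ _ assms(2)] dirB[OF meas] by blast
    then show ?thesis by auto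
  qed
  show ?thesis
  proof (cases S)
    case (enat s)
    have se: "{k. 1 \<le> k \<and> S \<le> enat k} = {k. max 1 s \<le> k}" using enat by auto
    have "N_inf M \<epsilon> \<A> = enat (max 1 s)" unfolding N_inf_def eq se by (rule Inf_enat_up)
    moreover have "enat (max 1 s) = max 1 S" using enat by (simp add: one_enat_def max_def)
    ultimately show ?thesis by (simp add: S_def)
  next
    case infinity
    then have "{k. 1 \<le> k \<and> S \<le> enat k} = {}" by auto
    then show ?thesis unfolding N_inf_def eq S_def[symmetric] using infinity
      by (simp add: Inf_enat_def)
  qed
qed

lemma cnf_ge1:
  assumes "space M \<noteq> {}"
  shows "1 \<le> cover_num_fun M f \<epsilon>"
  unfolding cover_num_fun_def
proof (rule Inf_greatest, clarify)
  fix g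
  show "1 \<le> cover_num (g ` space M) \<epsilon>" unfolding cover_num_def
  proof (rule Inf_greatest, clarify)
    fix n C assume "finite C" "g ` space M \<subseteq> (\<Union>c\<in>C. {c - \<epsilon>..c + \<epsilon>})"
    then have "C \<noteq> {}" using assms by auto
    then have "card C \<noteq> 0" using \<open>finite C\<close> by simp
    then show "1 \<le> enat (card C)" by (simp add: one_enat_def)
  qed
qed

lemma max1: "(max 1 (X::enat) < \<infinity>) = (X < \<infinity>)"
  by (cases X) (auto simp: max_def one_enat_def)

theorem theorem4p10:
  fixes M :: "'a measure" and \<A> :: "('a \<Rightarrow> real) set"
  assumes "emeasure M (space M) \<noteq> 0"
    and "\<A> \<subseteq> Linf M"
  shows "(unif_approx M \<A> \<longleftrightarrow> (\<forall>\<epsilon>>0. (SUP f\<in>\<A>. cover_num_fun M f \<epsilon>) < \<infinity>))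
       \<and> (\<A> \<noteq> {} \<longrightarrow> unif_approx M \<A> \<longrightarrow>
            (\<forall>\<epsilon>>0. N_inf M \<epsilon> \<A> = (SUP f\<in>\<A>. cover_num_fun M f \<epsilon>)))"
proof -
  have sp: "space M \<noteq> {}" using assms(1) by auto
  have N: "N_inf M \<epsilon> \<A> = max 1 (SUP f\<in>\<A>. cover_num_fun M f \<epsilon>)" if "\<epsilon> > 0" for \<epsilon>
    using N_eq[OF assms(2)] that by simp
  have 1: "unif_approx M \<A> \<longleftrightarrow> (\<forall>\<epsilon>>0. (SUP f\<in>\<A>. cover_num_fun M f \<epsilon>) < \<infinity>)"
    unfolding unif_approx_def using N max1 by auto
  have 2: "N_inf M \<epsilon> \<A> = (SUP f\<in>\<A>. cover_num_fun M f \<epsilon>)" if ne: "\<A> \<noteq> {}" and ep: "\<epsilon> > 0" for \<epsilon>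
  proof -
    obtain f where "f \<in> \<A>" using ne by blast
    then have "1 \<le> (SUP f\<in>\<A>. cover_num_fun M f \<epsilon>)"
      using cnf_ge1[OF sp, of f] by (meson SUP_upper order_trans)
    then show ?thesis using N[OF ep] by (simp add: max_def)
  qed
  show ?thesis using 1 2 by blast
qed

end
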